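(* Let $(\mathcal{C},\mathbb{E},\mathfrak{s})$ satisfy (ET1) and (ET2), and let $\mathcal{I}$ be a special precovering ideal of $\mathcal{C}$. If $\mathcal{I}^{\perp_{\mathbb{E}}}$ is an object ideal, then $\mathcal{I}$ is an object-special precovering ideal.
   Context: $\mathcal{C}$ additive, $\mathbb{E}:\mathcal{C}^{\mathrm{op}}\times\mathcal{C}\to\mathrm{Ab}$ biadditive (ET1); for $\delta\in\mathbb{E}(C,A)$, $a:A\to A'$, $c:C'\to C$ put $a_\star\delta=\mathbb{E}(C,a)(\delta)$, $c^\star\delta=\mathbb{E}(c,A)(\delta)$. (ET2): $\mathfrak{s}$ is an additive realization (Nakaoka–Palu): each $\delta\in\mathbb{E}(C,A)$ is assigned an equivalence class of sequences $A\to B\to C$ (up to isomorphism of middle terms), $0$ is realized by split sequences, realization respects direct sums, and if $a_\star\delta=c^\star\delta'$ there is a middle map making the realizing sequences commute. Realized pairs are $\mathbb{E}$-triangles $A\to B\to C\overset{\delta}{\dashrightarrow}$; commuting triples $(a,b,c)$ with $a_\star\delta=c^\star\delta'$ are morphisms of $\mathbb{E}$-triangles. Ideal: class of morphisms with zeros, closed under sums and two-sided composition. $\mathcal{I}^{\perp_{\mathbb{E}}}=\{g:A\to Y\mid m^\star g_\star\delta=0\ \forall m\in\mathcal{I},\,m:X\to C,\ \forall\delta\in\mathbb{E}(C,A)\}$. For a class $\mathcal{K}$ of morphisms, $\mathrm{Ob}(\mathcal{K})=\{A\mid \mathrm{id}_A\in\mathcal{K}\}$ and $\langle\mathcal{K}\rangle$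 is the smallest ideal containing $\mathcal{K}$; $\mathcal{K}$ is an object ideal if $\mathcal{K}=\langle\mathrm{Ob}(\mathcal{K})\rangle$ (i.e. it consists of the morphisms factoring through objects of $\mathrm{Ob}(\mathcal{K})$); write $A\in\mathcal{K}$ for $A\in\mathrm{Ob}(\mathcal{K})$. A special $\mathcal{I}$-precover of $C$: $i:X\to C$ in $\mathcal{I}$ with $\mathbb{E}$-triangles $A\to B\to C\overset{\delta}{\dashrightarrow}$, $A'\to X\xrightarrow{i}C\overset{\delta'}{\dashrightarrow}$ and a morphism $(j,b,\mathrm{id}_C)$ between them, $j\in\mathcal{I}^{\perp_{\mathbb{E}}}$; $\mathcal{I}$ is special precovering if every object has one. An object-special $\mathcal{I}$-precover of $C$: $i:X\to C$ in $\mathcal{I}$ for which there is an $\mathbb{E}$-triangle $A\to X\xrightarrow{i}C\overset{\delta}{\dashrightarrow}$ with $A\in\mathcal{I}^{\perp_{\mathbb{E}}}$; $\mathcal{I}$ is object-special precovering if every object has one. *)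

theory Defs
  imports "HOL-Algebra.Group"
begin

text \<open>HomG X A B : the abelian group Hom(A,B) (group law written multiplicatively
     in HOL-Algebra style; its unit is the zero morphism).
  Comp X g f : composition g o f.
  ExtG X C A : the abelian group E(C,A).
  Emap X c a : the map E(c,a) : E(C,A) -> E(C',A') for c : C' -> C, a : A -> A'.
  Rlz X C A d x y : the sequence A -x-> B -y-> C belongs to the class s(d),
     for d in E(C,A).\<close>

record ('o,'m,'e) etcat =
  Dom  :: "'m \<Rightarrow> 'o"
  Cod  :: "'m \<Rightarrow> 'o"
  HomG :: "'o \<Rightarrow> 'o \<Rightarrow> 'm monoid"
  Comp :: "'m \<Rightarrow> 'm \<Rightarrow> 'm"
  Ide  :: "'o \<Rightarrow> 'm"
  ExtG :: "'o \<Rightarrow> 'o \<Rightarrow> 'e monoid"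
  Emap :: "'m \<Rightarrow> 'm \<Rightarrow> 'e \<Rightarrow> 'e"
  Rlz  :: "'o \<Rightarrow> 'o \<Rightarrow> 'e \<Rightarrow> 'm \<Rightarrow> 'm \<Rightarrow> bool"

abbreviation Hom :: "('o,'m,'e) etcat \<Rightarrow> 'o \<Rightarrow> 'o \<Rightarrow> 'm set" where
  "Hom X A B \<equiv> carrier (HomG X A B)"

abbreviation Ext :: "('o,'m,'e) etcat \<Rightarrow> 'o \<Rightarrow> 'o \<Rightarrow> 'e set" where
  "Ext X C A \<equiv> carrier (ExtG X C A)"

definition push :: "('o,'m,'e) etcat \<Rightarrow> 'o \<Rightarrow> 'm \<Rightarrow> 'e \<Rightarrow> 'e" where
  "push X C a d = Emap X (Ide X C) a d"

definition pull :: "('o,'m,'e) etcat \<Rightarrow> 'o \<Rightarrow> 'm \<Rightarrow> 'e \<Rightarrow> 'e" where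
  "pull X A c d = Emap X c (Ide X A) d"

definition is_biprod :: "('o,'m,'e) etcat \<Rightarrow> 'o \<Rightarrow> 'o \<Rightarrow> 'o \<Rightarrow> 'm \<Rightarrow> 'm \<Rightarrow> 'm \<Rightarrow> 'm \<Rightarrow> bool" where
  "is_biprod X A B P iA iB pA pB \<longleftrightarrow>
     iA \<in> Hom X A P \<and> iB \<in> Hom X B P \<and> pA \<in> Hom X P A \<and> pB \<in> Hom X P B \<and>
     Comp X pA iA = Ide X A \<and> Comp X pB iB = Ide X B \<and>
     Comp X iA pA \<otimes>\<^bsub>HomG X P P\<^esub> Comp X iB pB = Ide X P"

definition seq_equiv :: "('o,'m,'e) etcat \<Rightarrow> 'o \<Rightarrow> 'o \<Rightarrow> 'm \<Rightarrow> 'm \<Rightarrow> 'm \<Rightarrow> 'm \<Rightarrow> bool" where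
  "seq_equiv X A C x y x' y' \<longleftrightarrow>
     (\<exists>B B' b b'. x \<in> Hom X A B \<and> y \<in> Hom X B C \<and> x' \<in> Hom X A B' \<and> y' \<in> Hom X B' C \<and>
        b \<in> Hom X B B' \<and> b' \<in> Hom X B' B \<and>
        Comp X b' b = Ide X B \<and> Comp X b b' = Ide X B' \<and>
        Comp X b x = x' \<and> Comp X y' b = y)"

definition additive_cat :: "('o,'m,'e) etcat \<Rightarrow> bool" where
  "additive_cat X \<longleftrightarrow>
    (\<forall>A B. comm_group (HomG X A B)) \<and>
    (\<forall>A B f. f \<in> Hom X A B \<longrightarrow> Dom X f = A \<and> Cod X f = B) \<and>
    (\<forall>A B C f g. f \<in> Hom X A B \<longrightarrow> g \<in> Hom X B C \<longrightarrow> Comp X g f \<in> Hom X A C) \<and>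
    (\<forall>A B C D f g h. f \<in> Hom X A B \<longrightarrow> g \<in> Hom X B C \<longrightarrow> h \<in> Hom X C D \<longrightarrow>
        Comp X h (Comp X g f) = Comp X (Comp X h g) f) \<and>
    (\<forall>A. Ide X A \<in> Hom X A A) \<and>
    (\<forall>A B f. f \<in> Hom X A B \<longrightarrow> Comp X (Ide X B) f = f \<and> Comp X f (Ide X A) = f) \<and>
    (\<forall>A B C f g g'. f \<in> Hom X A B \<longrightarrow> g \<in> Hom X B C \<longrightarrow> g' \<in> Hom X B C \<longrightarrow>
        Comp X (g \<otimes>\<^bsub>HomG X B C\<^esub> g') f = Comp X g f \<otimes>\<^bsub>HomG X A C\<^esub> Comp X g' f) \<and>
    (\<forall>A B C f f' g. f \<in> Hom X A B \<longrightarrow> f' \<in> Hom X A B \<longrightarrow> g \<in> Hom X B C \<longrightarrow>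
        Comp X g (f \<otimes>\<^bsub>HomG X A B\<^esub> f') = Comp X g f \<otimes>\<^bsub>HomG X A C\<^esub> Comp X g f') \<and>
    (\<exists>Z. \<forall>A. Hom X Z A = {\<one>\<^bsub>HomG X Z A\<^esub>} \<and> Hom X A Z = {\<one>\<^bsub>HomG X A Z\<^esub>}) \<and>
    (\<forall>A B. \<exists>P iA iB pA pB. is_biprod X A B P iA iB pA pB)"

definition ET1 :: "('o,'m,'e) etcat \<Rightarrow> bool" where
  "ET1 X \<longleftrightarrow>
    (\<forall>C A. comm_group (ExtG X C A)) \<and>
    (\<forall>C C' A A' c a. c \<in> Hom X C' C \<longrightarrow> a \<in> Hom X A A' \<longrightarrow>
        Emap X c a \<in> hom (ExtG X C A) (ExtG X C' A')) \<and>
    (\<forall>C A d. d \<in> Ext X C A \<longrightarrow> Emap X (Ide X C) (Ide X A) d = d) \<and>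
    (\<forall>C C' C'' A A' A'' c c' a a' d. c \<in> Hom X C' C \<longrightarrow> c' \<in> Hom X C'' C' \<longrightarrow>
        a \<in> Hom X A A' \<longrightarrow> a' \<in> Hom X A' A'' \<longrightarrow> d \<in> Ext X C A \<longrightarrow>
        Emap X (Comp X c c') (Comp X a' a) d = Emap X c' a' (Emap X c a d)) \<and>
    (\<forall>C C' A c1 c2 d. c1 \<in> Hom X C' C \<longrightarrow> c2 \<in> Hom X C' C \<longrightarrow> d \<in> Ext X C A \<longrightarrow>
        Emap X (c1 \<otimes>\<^bsub>HomG X C' C\<^esub> c2) (Ide X A) d =
        Emap X c1 (Ide X A) d \<otimes>\<^bsub>ExtG X C' A\<^esub> Emap X c2 (Ide X A) d) \<and>
    (\<forall>C A A' a1 a2 d. a1 \<in> Hom X A A' \<longrightarrow> a2 \<in> Hom X A A' \<longrightarrow> d \<in> Ext X C A \<longrightarrow>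
        Emap X (Ide X C) (a1 \<otimes>\<^bsub>HomG X A A'\<^esub> a2) d =
        Emap X (Ide X C) a1 d \<otimes>\<^bsub>ExtG X C A'\<^esub> Emap X (Ide X C) a2 d)"

definition ET2 :: "('o,'m,'e) etcat \<Rightarrow> bool" where
  "ET2 X \<longleftrightarrow>
    (\<forall>C A d x y. Rlz X C A d x y \<longrightarrow>
        d \<in> Ext X C A \<and> x \<in> Hom X A (Cod X x) \<and> y \<in> Hom X (Cod X x) C) \<and>
    (\<forall>C A d. d \<in> Ext X C A \<longrightarrow> (\<exists>x y. Rlz X C A d x y)) \<and>
    (\<forall>C A d x y x' y'. Rlz X C A d x y \<longrightarrow>
        (Rlz X C A d x' y' \<longleftrightarrow> seq_equiv X A C x y x' y')) \<and>
    (\<forall>C A C' A' d d' x y x' y' a c. Rlz X C A d x y \<longrightarrow> Rlz X C' A' d' x' y' \<longrightarrow>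
        a \<in> Hom X A A' \<longrightarrow> c \<in> Hom X C C' \<longrightarrow> push X C a d = pull X A' c d' \<longrightarrow>
        (\<exists>b. b \<in> Hom X (Cod X x) (Cod X x') \<and>
             Comp X b x = Comp X x' a \<and> Comp X y' b = Comp X c y)) \<and>
    (\<forall>A C P iA iC pA pC. is_biprod X A C P iA iC pA pC \<longrightarrow>
        Rlz X C A \<one>\<^bsub>ExtG X C A\<^esub> iA pC) \<and>
    (\<forall>C A C' A' d d' x y x' y' PA iA iA' pA pA' PB jB jB' qB qB' PC kC kC' rC rC' t.
        Rlz X C A d x y \<longrightarrow> Rlz X C' A' d' x' y' \<longrightarrow>
        is_biprod X A A' PA iA iA' pA pA' \<longrightarrow>
        is_biprod X (Cod X x) (Cod X x') PB jB jB' qB qB' \<longrightarrow>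
        is_biprod X C C' PC kC kC' rC rC' \<longrightarrow>
        t \<in> Ext X PC PA \<longrightarrow>
        Emap X kC pA t = d \<longrightarrow> Emap X kC' pA' t = d' \<longrightarrow>
        Emap X kC pA' t = \<one>\<^bsub>ExtG X C A'\<^esub> \<longrightarrow> Emap X kC' pA t = \<one>\<^bsub>ExtG X C' A\<^esub> \<longrightarrow>
        Rlz X PC PA t
          (Comp X jB (Comp X x pA) \<otimes>\<^bsub>HomG X PA PB\<^esub> Comp X jB' (Comp X x' pA'))
          (Comp X kC (Comp X y qB) \<otimes>\<^bsub>HomG X PB PC\<^esub> Comp X kC' (Comp X y' qB')))"

definition ET12 :: "('o,'m,'e) etcat \<Rightarrow> bool" where
  "ET12 X \<longleftrightarrow> additive_cat X \<and> ET1 X \<and> ET2 X"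

definition is_ideal :: "('o,'m,'e) etcat \<Rightarrow> ('o \<Rightarrow> 'o \<Rightarrow> 'm set) \<Rightarrow> bool" where
  "is_ideal X I \<longleftrightarrow>
    (\<forall>A B. I A B \<subseteq> Hom X A B \<and> \<one>\<^bsub>HomG X A B\<^esub> \<in> I A B \<and>
        (\<forall>f\<in>I A B. \<forall>g\<in>I A B. f \<otimes>\<^bsub>HomG X A B\<^esub> g \<in> I A B)) \<and>
    (\<forall>A B C D f g h. f \<in> Hom X A B \<longrightarrow> g \<in> I B C \<longrightarrow> h \<in> Hom X C D \<longrightarrow>
        Comp X h (Comp X g f) \<in> I A D)"

definition perpE :: "('o,'m,'e) etcat \<Rightarrow> ('o \<Rightarrow> 'o \<Rightarrow> 'm set) \<Rightarrow> 'o \<Rightarrow> 'o \<Rightarrow> 'm set" where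
  "perpE X I A Y = {g \<in> Hom X A Y. \<forall>Xo C m d. m \<in> I Xo C \<longrightarrow> d \<in> Ext X C A \<longrightarrow>
      pull X Y m (push X C g d) = \<one>\<^bsub>ExtG X Xo Y\<^esub>}"

definition Obj :: "('o,'m,'e) etcat \<Rightarrow> ('o \<Rightarrow> 'o \<Rightarrow> 'm set) \<Rightarrow> 'o set" where
  "Obj X K = {A. Ide X A \<in> K A A}"

definition gen_ideal :: "('o,'m,'e) etcat \<Rightarrow> ('o \<Rightarrow> 'o \<Rightarrow> 'm set) \<Rightarrow> 'o \<Rightarrow> 'o \<Rightarrow> 'm set" where
  "gen_ideal X K A B = {f. \<forall>J. is_ideal X J \<longrightarrow> (\<forall>A' B'. K A' B' \<subseteq> J A' B') \<longrightarrow> f \<in> J A B}"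

definition ids_of :: "('o,'m,'e) etcat \<Rightarrow> 'o set \<Rightarrow> 'o \<Rightarrow> 'o \<Rightarrow> 'm set" where
  "ids_of X S A B = (if A = B \<and> A \<in> S then {Ide X A} else {})"

definition object_ideal :: "('o,'m,'e) etcat \<Rightarrow> ('o \<Rightarrow> 'o \<Rightarrow> 'm set) \<Rightarrow> bool" where
  "object_ideal X K \<longleftrightarrow> K = gen_ideal X (ids_of X (Obj X K))"

definition special_precover :: "('o,'m,'e) etcat \<Rightarrow> ('o \<Rightarrow> 'o \<Rightarrow> 'm set) \<Rightarrow> 'o \<Rightarrow> 'o \<Rightarrow> 'm \<Rightarrow> bool" where
  "special_precover X I C Xo i \<longleftrightarrow> i \<in> I Xo C \<and>
     (\<exists>A A' d d' x y x' j b.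
        Rlz X C A d x y \<and> Rlz X C A' d' x' i \<and>
        j \<in> Hom X A A' \<and> b \<in> Hom X (Cod X x) Xo \<and>
        Comp X b x = Comp X x' j \<and> Comp X i b = Comp X (Ide X C) y \<and>
        push X C j d = pull X A' (Ide X C) d' \<and>
        j \<in> perpE X I A A')"

definition special_precovering :: "('o,'m,'e) etcat \<Rightarrow> ('o \<Rightarrow> 'o \<Rightarrow> 'm set) \<Rightarrow> bool" where
  "special_precovering X I \<longleftrightarrow> (\<forall>C. \<exists>Xo i. special_precover X I C Xo i)"

definition object_special_precover :: "('o,'m,'e) etcat \<Rightarrow> ('o \<Rightarrow> 'o \<Rightarrow> 'm set) \<Rightarrow> 'o \<Rightarrow> 'o \<Rightarrow> 'm \<Rightarrow> bool" where
  "object_special_precover X I C Xo i \<longleftrightarrow> i \<in> I Xo C \<and>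
     (\<exists>A x d. Rlz X C A d x i \<and> A \<in> Obj X (perpE X I))"

definition object_special_precovering :: "('o,'m,'e) etcat \<Rightarrow> ('o \<Rightarrow> 'o \<Rightarrow> 'm set) \<Rightarrow> bool" where
  "object_special_precovering X I \<longleftrightarrow> (\<forall>C. \<exists>Xo i. object_special_precover X I C Xo i)"

end

theory Submission
  imports Defs
begin
context
  fixes X :: "('o,'m,'e) etcat"
  assumes ET: "ET12 X"
begin

lemma AC: "additive_cat X" using ET unfolding ET12_def by blast
lemma E1: "ET1 X" using ET unfolding ET12_def by blast
lemma E2: "ET2 X" using ET unfolding ET12_def by blast

lemma hom_cg: "comm_group (HomG X A B)" using AC unfolding additive_cat_def by simp
lemma hom_g: "group (HomG X A B)" using hom_cg comm_group.axioms(2) by blast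
lemma ext_cg: "comm_group (ExtG X C A)" using E1 unfolding ET1_def by simp
lemma ext_g: "group (ExtG X C A)" using ext_cg comm_group.axioms(2) by blast

lemma comp_closed: "f \<in> Hom X A B \<Longrightarrow> g \<in> Hom X B C \<Longrightarrow> Comp X g f \<in> Hom X A C"
  using AC unfolding additive_cat_def by simp
lemma comp_assoc: "f \<in> Hom X A B \<Longrightarrow> g \<in> Hom X B C \<Longrightarrow> h \<in> Hom X C D \<Longrightarrow>
        Comp X h (Comp X g f) = Comp X (Comp X h g) f"
  using AC unfolding additive_cat_def by simp
lemma ide_hom: "Ide X A \<in> Hom X A A" using AC unfolding additive_cat_def by simp
lemma ide_l: "f \<in> Hom X A B \<Longrightarrow> Comp X (Ide X B) f = f" using AC unfolding additive_cat_def by simp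
lemma ide_r: "f \<in> Hom X A B \<Longrightarrow> Comp X f (Ide X A) = f" using AC unfolding additive_cat_def by simp
lemma dist_l: "f \<in> Hom X A B \<Longrightarrow> g \<in> Hom X B C \<Longrightarrow> g' \<in> Hom X B C \<Longrightarrow>
        Comp X (g \<otimes>\<^bsub>HomG X B C\<^esub> g') f = Comp X g f \<otimes>\<^bsub>HomG X A C\<^esub> Comp X g' f"
  using AC unfolding additive_cat_def by simp
lemma dist_r: "f \<in> Hom X A B \<Longrightarrow> f' \<in> Hom X A B \<Longrightarrow> g \<in> Hom X B C \<Longrightarrow>
        Comp X g (f \<otimes>\<^bsub>HomG X A B\<^esub> f') = Comp X g f \<otimes>\<^bsub>HomG X A C\<^esub> Comp X g f'"
  using AC unfolding additive_cat_def by simp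
lemma dom_cod: "f \<in> Hom X A B \<Longrightarrow> Dom X f = A \<and> Cod X f = B"
  using AC unfolding additive_cat_def by simp

lemma Emap_hom: "c \<in> Hom X C' C \<Longrightarrow> a \<in> Hom X A A' \<Longrightarrow>
        Emap X c a \<in> hom (ExtG X C A) (ExtG X C' A')"
  using E1 unfolding ET1_def by simp
lemma Emap_id: "d \<in> Ext X C A \<Longrightarrow> Emap X (Ide X C) (Ide X A) d = d"
  using E1 unfolding ET1_def by simp
lemma Emap_comp: "c \<in> Hom X C' C \<Longrightarrow> c' \<in> Hom X C'' C' \<Longrightarrow>
        a \<in> Hom X A A' \<Longrightarrow> a' \<in> Hom X A' A'' \<Longrightarrow> d \<in> Ext X C A \<Longrightarrow>
        Emap X (Comp X c c') (Comp X a' a) d = Emap X c' a' (Emap X c a d)"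
  using E1 unfolding ET1_def by simp
lemma Emap_add2: "a1 \<in> Hom X A A' \<Longrightarrow> a2 \<in> Hom X A A' \<Longrightarrow> d \<in> Ext X C A \<Longrightarrow>
        Emap X (Ide X C) (a1 \<otimes>\<^bsub>HomG X A A'\<^esub> a2) d =
        Emap X (Ide X C) a1 d \<otimes>\<^bsub>ExtG X C A'\<^esub> Emap X (Ide X C) a2 d"
  using E1 unfolding ET1_def by simp

lemma Emap_closed: "c \<in> Hom X C' C \<Longrightarrow> a \<in> Hom X A A' \<Longrightarrow> d \<in> Ext X C A \<Longrightarrow>
   Emap X c a d \<in> Ext X C' A'"
  using Emap_hom by (meson hom_in_carrier)
lemma Emap_mult: "c \<in> Hom X C' C \<Longrightarrow> a \<in> Hom X A A' \<Longrightarrow> d \<in> Ext X C A \<Longrightarrow> d' \<in> Ext X C A \<Longrightarrow>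
   Emap X c a (d \<otimes>\<^bsub>ExtG X C A\<^esub> d') = Emap X c a d \<otimes>\<^bsub>ExtG X C' A'\<^esub> Emap X c a d'"
  using Emap_hom by (meson hom_mult)
lemma Emap_one: "c \<in> Hom X C' C \<Longrightarrow> a \<in> Hom X A A' \<Longrightarrow>
   Emap X c a \<one>\<^bsub>ExtG X C A\<^esub> = \<one>\<^bsub>ExtG X C' A'\<^esub>"
proof -
  assume a: "c \<in> Hom X C' C" "a \<in> Hom X A A'"
  interpret group_hom "ExtG X C A" "ExtG X C' A'" "Emap X c a"
    using a Emap_hom ext_g unfolding group_hom_def group_hom_axioms_def by blast
  show ?thesis by (rule hom_one)
qed

lemma idem_one: "group G \<Longrightarrow> x \<in> carrier G \<Longrightarrow> x \<otimes>\<^bsub>G\<^esub> x = x \<Longrightarrow> x = \<one>\<^bsub>G\<^esub>"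
  by (metis group.l_cancel_one)

lemma comp_zero_r: "v \<in> Hom X B C \<Longrightarrow> Comp X v \<one>\<^bsub>HomG X A B\<^esub> = \<one>\<^bsub>HomG X A C\<^esub>"
proof -
  assume v: "v \<in> Hom X B C"
  have o: "\<one>\<^bsub>HomG X A B\<^esub> \<in> Hom X A B" using hom_g group.is_monoid monoid.one_closed by blast
  have "Comp X v \<one>\<^bsub>HomG X A B\<^esub> = Comp X v (\<one>\<^bsub>HomG X A B\<^esub> \<otimes>\<^bsub>HomG X A B\<^esub> \<one>\<^bsub>HomG X A B\<^esub>)"
    using hom_g o by (simp add: group.is_monoid monoid.l_one)
  also have "\<dots> = Comp X v \<one>\<^bsub>HomG X A B\<^esub> \<otimes>\<^bsub>HomG X A C\<^esub> Comp X v \<one>\<^bsub>HomG X A B\<^esub>"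
    using dist_r o v by blast
  finally show ?thesis using idem_one hom_g comp_closed o v by metis
qed

lemma push_zero: "d \<in> Ext X C A \<Longrightarrow> push X C \<one>\<^bsub>HomG X A A'\<^esub> d = \<one>\<^bsub>ExtG X C A'\<^esub>"
proof -
  assume d: "d \<in> Ext X C A"
  have o: "\<one>\<^bsub>HomG X A A'\<^esub> \<in> Hom X A A'" using hom_g group.is_monoid monoid.one_closed by blast
  have "push X C \<one>\<^bsub>HomG X A A'\<^esub> d = push X C (\<one>\<^bsub>HomG X A A'\<^esub> \<otimes>\<^bsub>HomG X A A'\<^esub> \<one>\<^bsub>HomG X A A'\<^esub>) d"
    using hom_g o by (simp add: group.is_monoid monoid.l_one)
  also have "\<dots> = push X C \<one>\<^bsub>HomG X A A'\<^esub> d \<otimes>\<^bsub>ExtG X C A'\<^esub> push X C \<one>\<^bsub>HomG X A A'\<^esub> d"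
    unfolding push_def using Emap_add2 o d by blast
  finally show ?thesis using idem_one ext_g Emap_closed o d ide_hom unfolding push_def by metis
qed

lemma push_comp: "f \<in> Hom X A B \<Longrightarrow> g \<in> Hom X B D \<Longrightarrow> d \<in> Ext X C A \<Longrightarrow>
   push X C (Comp X g f) d = push X C g (push X C f d)"
  unfolding push_def using Emap_comp[of "Ide X C" C C "Ide X C" C f A B g D d] ide_hom ide_l
  by metis

lemma pull_push: "m \<in> Hom X C' C \<Longrightarrow> g \<in> Hom X A A' \<Longrightarrow> d \<in> Ext X C A \<Longrightarrow>
   pull X A' m (push X C g d) = push X C' g (pull X A m d)"
proof -
  assume a: "m \<in> Hom X C' C" "g \<in> Hom X A A'" "d \<in> Ext X C A"
  have "pull X A' m (push X C g d) = Emap X (Comp X (Ide X C) m) (Comp X (Ide X A') g) d"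
    unfolding push_def pull_def using Emap_comp[of "Ide X C" C C m C' g A A' "Ide X A'" A' d] a ide_hom
    by metis
  also have "\<dots> = Emap X (Comp X m (Ide X C')) (Comp X g (Ide X A)) d"
    using a ide_l ide_r by metis
  also have "\<dots> = push X C' g (pull X A m d)"
    unfolding push_def pull_def using Emap_comp[of m C' C "Ide X C'" C' "Ide X A" A A g A' d] a ide_hom
    by metis
  finally show ?thesis .
qed


lemma cross: "is_biprod X W1 W2 P i1 i2 p1 p2 \<Longrightarrow> Comp X p2 i1 = \<one>\<^bsub>HomG X W1 W2\<^esub>"
proof -
  assume b: "is_biprod X W1 W2 P i1 i2 p1 p2"
  hence h: "i1 \<in> Hom X W1 P" "i2 \<in> Hom X W2 P" "p1 \<in> Hom X P W1" "p2 \<in> Hom X P W2"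
    "Comp X p1 i1 = Ide X W1" "Comp X p2 i2 = Ide X W2"
    "Comp X i1 p1 \<otimes>\<^bsub>HomG X P P\<^esub> Comp X i2 p2 = Ide X P"
    unfolding is_biprod_def by auto
  define x where "x = Comp X p2 i1"
  have xh: "x \<in> Hom X W1 W2" using h comp_closed x_def by blast
  have "Comp X (Ide X P) i1 = Comp X (Comp X i1 p1) i1 \<otimes>\<^bsub>HomG X W1 P\<^esub> Comp X (Comp X i2 p2) i1"
    using h(7)[symmetric] dist_l h comp_closed by metis
  also have "\<dots> = i1 \<otimes>\<^bsub>HomG X W1 P\<^esub> Comp X i2 x"
    using h comp_assoc ide_r x_def by metis
  finally have e: "i1 = i1 \<otimes>\<^bsub>HomG X W1 P\<^esub> Comp X i2 x" using ide_l h by metis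
  have "x = Comp X p2 (i1 \<otimes>\<^bsub>HomG X W1 P\<^esub> Comp X i2 x)" using e x_def by metis
  also have "\<dots> = x \<otimes>\<^bsub>HomG X W1 W2\<^esub> Comp X p2 (Comp X i2 x)"
    using dist_r h xh comp_closed x_def by metis
  also have "Comp X p2 (Comp X i2 x) = x" using comp_assoc h xh ide_l by metis
  finally have "x = x \<otimes>\<^bsub>HomG X W1 W2\<^esub> x" .
  thus ?thesis using idem_one hom_g xh x_def by metis
qed

lemma biprod_sym: "is_biprod X W1 W2 P i1 i2 p1 p2 \<Longrightarrow> is_biprod X W2 W1 P i2 i1 p2 p1"
  unfolding is_biprod_def using hom_cg comm_group.axioms(1) comm_monoid.m_comm comp_closed by metis

definition JJ :: "('o \<Rightarrow> 'o \<Rightarrow> 'm set) \<Rightarrow> 'o \<Rightarrow> 'o \<Rightarrow> 'm set" where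
  "JJ I A B = {f \<in> Hom X A B. \<forall>C d. d \<in> Ext X C A \<longrightarrow>
     (\<exists>W e v. W \<in> Obj X (perpE X I) \<and> e \<in> Ext X C W \<and> v \<in> Hom X W B \<and>
        push X C v e = push X C f d)}"

lemma perp_biprod:
  assumes I: "is_ideal X I" and b: "is_biprod X W1 W2 P i1 i2 p1 p2"
    and w1: "W1 \<in> Obj X (perpE X I)" and w2: "W2 \<in> Obj X (perpE X I)"
  shows "P \<in> Obj X (perpE X I)"
proof -
  from b have h: "i1 \<in> Hom X W1 P" "i2 \<in> Hom X W2 P" "p1 \<in> Hom X P W1" "p2 \<in> Hom X P W2"
    "Comp X i1 p1 \<otimes>\<^bsub>HomG X P P\<^esub> Comp X i2 p2 = Ide X P"
    unfolding is_biprod_def by auto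
  have key: "pull X P m (push X C (Comp X i p) d) = \<one>\<^bsub>ExtG X Xo P\<^esub>"
    if "W \<in> Obj X (perpE X I)" "i \<in> Hom X W P" "p \<in> Hom X P W" "m \<in> I Xo C" "d \<in> Ext X C P"
    for W i p m Xo C d
  proof -
    have m: "m \<in> Hom X Xo C" using I that unfolding is_ideal_def by blast
    have pd: "push X C p d \<in> Ext X C W" unfolding push_def using Emap_closed ide_hom that by blast
    have z: "pull X W m (push X C (Ide X W) (push X C p d)) = \<one>\<^bsub>ExtG X Xo W\<^esub>"
      using that(1,4) pd unfolding Obj_def perpE_def by blast
    have "push X C (Ide X W) (push X C p d) = push X C p d" using Emap_id pd unfolding push_def by blast
    hence z2: "pull X W m (push X C p d) = \<one>\<^bsub>ExtG X Xo W\<^esub>" using z by simp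
    have "pull X P m (push X C (Comp X i p) d) = pull X P m (push X C i (push X C p d))"
      using push_comp that by metis
    also have "\<dots> = push X Xo i (pull X W m (push X C p d))" using pull_push m that pd by blast
    also have "\<dots> = \<one>\<^bsub>ExtG X Xo P\<^esub>" using z2 Emap_one ide_hom that unfolding push_def by metis
    finally show ?thesis .
  qed
  have "Ide X P \<in> perpE X I P P"
    unfolding perpE_def
  proof (intro CollectI conjI allI impI)
    show "Ide X P \<in> Hom X P P" by (rule ide_hom)
    fix Xo C m d assume md: "m \<in> I Xo C" "d \<in> Ext X C P"
    have m: "m \<in> Hom X Xo C" using I md unfolding is_ideal_def by blast
    have c1: "Comp X i1 p1 \<in> Hom X P P" "Comp X i2 p2 \<in> Hom X P P" using h comp_closed by auto
    have "push X C (Ide X P) d = push X C (Comp X i1 p1) d \<otimes>\<^bsub>ExtG X C P\<^esub> push X C (Comp X i2 p2) d"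
      using h(5) Emap_add2 c1 md unfolding push_def by metis
    have pA: "push X C (Comp X i1 p1) d \<in> Ext X C P" "push X C (Comp X i2 p2) d \<in> Ext X C P"
      unfolding push_def using Emap_closed ide_hom c1 md by blast+
    hence "pull X P m (push X C (Ide X P) d) =
        pull X P m (push X C (Comp X i1 p1) d \<otimes>\<^bsub>ExtG X C P\<^esub> push X C (Comp X i2 p2) d)"
      using \<open>push X C (Ide X P) d = _\<close> by simp
    also have "\<dots> = pull X P m (push X C (Comp X i1 p1) d) \<otimes>\<^bsub>ExtG X Xo P\<^esub> pull X P m (push X C (Comp X i2 p2) d)"
      unfolding pull_def by (rule Emap_mult[OF m ide_hom pA])
    also have "\<dots> = \<one>\<^bsub>ExtG X Xo P\<^esub> \<otimes>\<^bsub>ExtG X Xo P\<^esub> \<one>\<^bsub>ExtG X Xo P\<^esub>"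
      using key w1 w2 h md by metis
    also have "\<dots> = \<one>\<^bsub>ExtG X Xo P\<^esub>" using ext_g by (simp add: group.is_monoid monoid.l_one)
    finally show "pull X P m (push X C (Ide X P) d) = \<one>\<^bsub>ExtG X Xo P\<^esub>" .
  qed
  thus ?thesis unfolding Obj_def by simp
qed

lemma JJ_ideal: assumes I: "is_ideal X I" shows "is_ideal X (JJ I)"
  unfolding is_ideal_def
proof (intro conjI allI impI ballI)
  fix A B show "JJ I A B \<subseteq> Hom X A B" unfolding JJ_def by blast
next
  fix A B
  obtain Z where Z: "\<And>A. Hom X Z A = {\<one>\<^bsub>HomG X Z A\<^esub>} \<and> Hom X A Z = {\<one>\<^bsub>HomG X A Z\<^esub>}"
    using AC unfolding additive_cat_def by metis
  have zi: "Ide X Z = \<one>\<^bsub>HomG X Z Z\<^esub>" using Z ide_hom by blast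
  have zo: "Z \<in> Obj X (perpE X I)"
    unfolding Obj_def perpE_def
  proof (intro CollectI conjI allI impI)
    show "Ide X Z \<in> Hom X Z Z" by (rule ide_hom)
    fix Xo C m d assume md: "m \<in> I Xo C" "d \<in> Ext X C Z"
    have m: "m \<in> Hom X Xo C" using I md unfolding is_ideal_def by blast
    show "pull X Z m (push X C (Ide X Z) d) = \<one>\<^bsub>ExtG X Xo Z\<^esub>"
      using zi push_zero md Emap_one m ide_hom unfolding pull_def by metis
  qed
  have o: "\<one>\<^bsub>HomG X A B\<^esub> \<in> Hom X A B" using hom_g group.is_monoid monoid.one_closed by blast
  show "\<one>\<^bsub>HomG X A B\<^esub> \<in> JJ I A B"
    unfolding JJ_def
  proof (intro CollectI conjI allI impI o)
    fix C d assume d: "d \<in> Ext X C A"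
    have e: "\<one>\<^bsub>ExtG X C Z\<^esub> \<in> Ext X C Z" using ext_g group.is_monoid monoid.one_closed by blast
    have v: "\<one>\<^bsub>HomG X Z B\<^esub> \<in> Hom X Z B" using hom_g group.is_monoid monoid.one_closed by blast
    have "push X C \<one>\<^bsub>HomG X Z B\<^esub> \<one>\<^bsub>ExtG X C Z\<^esub> = push X C \<one>\<^bsub>HomG X A B\<^esub> d"
      using push_zero d e by metis
    thus "\<exists>W e v. W \<in> Obj X (perpE X I) \<and> e \<in> Ext X C W \<and> v \<in> Hom X W B \<and>
        push X C v e = push X C \<one>\<^bsub>HomG X A B\<^esub> d" using zo e v by blast
  qed
next
  fix A B f g assume f: "f \<in> JJ I A B" and g: "g \<in> JJ I A B"
  have fh: "f \<in> Hom X A B" and gh: "g \<in> Hom X A B" using f g unfolding JJ_def by auto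
  show "f \<otimes>\<^bsub>HomG X A B\<^esub> g \<in> JJ I A B"
    unfolding JJ_def
  proof (intro CollectI conjI allI impI)
    show "f \<otimes>\<^bsub>HomG X A B\<^esub> g \<in> Hom X A B"
      using fh gh hom_g group.is_monoid monoid.m_closed by metis
    fix C d assume d: "d \<in> Ext X C A"
    obtain W1 e1 v1 where 1: "W1 \<in> Obj X (perpE X I)" "e1 \<in> Ext X C W1" "v1 \<in> Hom X W1 B"
      "push X C v1 e1 = push X C f d" using f d unfolding JJ_def by blast
    obtain W2 e2 v2 where 2: "W2 \<in> Obj X (perpE X I)" "e2 \<in> Ext X C W2" "v2 \<in> Hom X W2 B"
      "push X C v2 e2 = push X C g d" using g d unfolding JJ_def by blast
    obtain P i1 i2 p1 p2 where b: "is_biprod X W1 W2 P i1 i2 p1 p2"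
      using AC unfolding additive_cat_def by metis
    from b have h: "i1 \<in> Hom X W1 P" "i2 \<in> Hom X W2 P" "p1 \<in> Hom X P W1" "p2 \<in> Hom X P W2"
      "Comp X p1 i1 = Ide X W1" "Comp X p2 i2 = Ide X W2"
      unfolding is_biprod_def by auto
    have c12: "Comp X p2 i1 = \<one>\<^bsub>HomG X W1 W2\<^esub>" using cross b by blast
    have c21: "Comp X p1 i2 = \<one>\<^bsub>HomG X W2 W1\<^esub>" using cross biprod_sym b by blast
    define e where "e = push X C i1 e1 \<otimes>\<^bsub>ExtG X C P\<^esub> push X C i2 e2"
    define V where "V = Comp X v1 p1 \<otimes>\<^bsub>HomG X P B\<^esub> Comp X v2 p2"
    have pe: "push X C i1 e1 \<in> Ext X C P" "push X C i2 e2 \<in> Ext X C P"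
      unfolding push_def using Emap_closed ide_hom h 1 2 by blast+
    have eE: "e \<in> Ext X C P" unfolding e_def using pe ext_g group.is_monoid monoid.m_closed by metis
    have cv: "Comp X v1 p1 \<in> Hom X P B" "Comp X v2 p2 \<in> Hom X P B" using comp_closed h 1 2 by auto
    have VH: "V \<in> Hom X P B" unfolding V_def using cv hom_g group.is_monoid monoid.m_closed by metis
    have V1: "Comp X V i1 = v1"
    proof -
      have "Comp X V i1 = Comp X (Comp X v1 p1) i1 \<otimes>\<^bsub>HomG X W1 B\<^esub> Comp X (Comp X v2 p2) i1"
        unfolding V_def using dist_l cv h by blast
      also have "\<dots> = v1 \<otimes>\<^bsub>HomG X W1 B\<^esub> \<one>\<^bsub>HomG X W1 B\<^esub>"
      proof -
        have "Comp X (Comp X v1 p1) i1 = Comp X v1 (Comp X p1 i1)" using comp_assoc[OF h(1) h(3) 1(3)] by simp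
        also have "\<dots> = v1" using h(5) ide_r[OF 1(3)] by simp
        finally have a1: "Comp X (Comp X v1 p1) i1 = v1" .
        have "Comp X (Comp X v2 p2) i1 = Comp X v2 (Comp X p2 i1)" using comp_assoc[OF h(1) h(4) 2(3)] by simp
        also have "\<dots> = \<one>\<^bsub>HomG X W1 B\<^esub>" using c12 comp_zero_r[OF 2(3)] by simp
        finally show ?thesis using a1 by simp
      qed
      finally show ?thesis using 1 hom_g by (simp add: group.is_monoid monoid.r_one)
    qed
    have V2: "Comp X V i2 = v2"
    proof -
      have "Comp X V i2 = Comp X (Comp X v1 p1) i2 \<otimes>\<^bsub>HomG X W2 B\<^esub> Comp X (Comp X v2 p2) i2"
        unfolding V_def using dist_l cv h by blast
      also have "\<dots> = \<one>\<^bsub>HomG X W2 B\<^esub> \<otimes>\<^bsub>HomG X W2 B\<^esub> v2"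
      proof -
        have "Comp X (Comp X v2 p2) i2 = Comp X v2 (Comp X p2 i2)" using comp_assoc[OF h(2) h(4) 2(3)] by simp
        also have "\<dots> = v2" using h(6) ide_r[OF 2(3)] by simp
        finally have a1: "Comp X (Comp X v2 p2) i2 = v2" .
        have "Comp X (Comp X v1 p1) i2 = Comp X v1 (Comp X p1 i2)" using comp_assoc[OF h(2) h(3) 1(3)] by simp
        also have "\<dots> = \<one>\<^bsub>HomG X W2 B\<^esub>" using c21 comp_zero_r[OF 1(3)] by simp
        finally show ?thesis using a1 by simp
      qed
      finally show ?thesis using 2 hom_g by (simp add: group.is_monoid monoid.l_one)
    qed
    have "push X C V e = push X C V (push X C i1 e1) \<otimes>\<^bsub>ExtG X C B\<^esub> push X C V (push X C i2 e2)"
      unfolding e_def push_def using Emap_mult VH ide_hom pe unfolding push_def by metis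
    also have "\<dots> = push X C v1 e1 \<otimes>\<^bsub>ExtG X C B\<^esub> push X C v2 e2"
      using push_comp V1 V2 VH h 1 2 by metis
    also have "\<dots> = push X C (f \<otimes>\<^bsub>HomG X A B\<^esub> g) d"
      using 1 2 Emap_add2 fh gh d unfolding push_def by metis
    finally show "\<exists>W e v. W \<in> Obj X (perpE X I) \<and> e \<in> Ext X C W \<and> v \<in> Hom X W B \<and>
        push X C v e = push X C (f \<otimes>\<^bsub>HomG X A B\<^esub> g) d"
      using perp_biprod[OF I b 1(1) 2(1)] eE VH by blast
  qed
next
  fix A B C D f g h assume a: "f \<in> Hom X A B" "g \<in> JJ I B C" "h \<in> Hom X C D"
  have gh: "g \<in> Hom X B C" using a unfolding JJ_def by auto
  show "Comp X h (Comp X g f) \<in> JJ I A D"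
    unfolding JJ_def
  proof (intro CollectI conjI allI impI)
    show "Comp X h (Comp X g f) \<in> Hom X A D" using comp_closed a gh by blast
    fix C' d assume d: "d \<in> Ext X C' A"
    have fd: "push X C' f d \<in> Ext X C' B" unfolding push_def using Emap_closed ide_hom a d by blast
    obtain W e v where w: "W \<in> Obj X (perpE X I)" "e \<in> Ext X C' W" "v \<in> Hom X W C"
      "push X C' v e = push X C' g (push X C' f d)" using a(2) fd unfolding JJ_def by blast
    have "push X C' (Comp X h v) e = push X C' h (push X C' v e)" using push_comp w a by blast
    also have "\<dots> = push X C' (Comp X h (Comp X g f)) d"
      using w(4) push_comp[OF a(1) gh d, symmetric] push_comp[OF comp_closed[OF a(1) gh] a(3) d, symmetric] by simp
    finally show "\<exists>W e v. W \<in> Obj X (perpE X I) \<and> e \<in> Ext X C' W \<and> v \<in> Hom X W D \<and>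
        push X C' v e = push X C' (Comp X h (Comp X g f)) d"
      using w comp_closed a by blast
  qed
qed


lemma rlz_props: "Rlz X C A d x y \<Longrightarrow> d \<in> Ext X C A \<and> x \<in> Hom X A (Cod X x) \<and> y \<in> Hom X (Cod X x) C"
  using conjunct1[OF E2[unfolded ET2_def]] by blast
lemma rlz_ex: "d \<in> Ext X C A \<Longrightarrow> \<exists>x y. Rlz X C A d x y"
  using conjunct1[OF conjunct2[OF E2[unfolded ET2_def]]] by blast
lemma rlz_mor: "Rlz X C A d x y \<Longrightarrow> Rlz X C' A' d' x' y' \<Longrightarrow>
        a \<in> Hom X A A' \<Longrightarrow> c \<in> Hom X C C' \<Longrightarrow> push X C a d = pull X A' c d' \<Longrightarrow>
        (\<exists>b. b \<in> Hom X (Cod X x) (Cod X x') \<and>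
             Comp X b x = Comp X x' a \<and> Comp X y' b = Comp X c y)"
  using conjunct1[OF conjunct2[OF conjunct2[OF conjunct2[OF E2[unfolded ET2_def]]]]] by blast

lemma main_lemma:
  assumes I: "is_ideal X I" and sp: "special_precovering X I"
    and oi: "object_ideal X (perpE X I)"
  shows "object_special_precovering X I"
  unfolding object_special_precovering_def
proof
  fix C
  obtain Xo i where "special_precover X I C Xo i" using sp unfolding special_precovering_def by blast
  then obtain A A' d d' x y x' j b where
    iI: "i \<in> I Xo C" and r1: "Rlz X C A d x y" and r2: "Rlz X C A' d' x' i" and
    jh: "j \<in> Hom X A A'" and pj: "push X C j d = pull X A' (Ide X C) d'" and jp: "j \<in> perpE X I A A'"
    unfolding special_precover_def by blast
  have dE: "d \<in> Ext X C A" using r1 rlz_props by blast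
  have ih: "i \<in> Hom X (Cod X x') C" using r2 rlz_props by blast
  have ih2: "i \<in> Hom X Xo C" using iI I unfolding is_ideal_def by blast
  have cx: "Cod X x' = Xo" using dom_cod ih ih2 by metis
  have "j \<in> gen_ideal X (ids_of X (Obj X (perpE X I))) A A'" using jp oi unfolding object_ideal_def by metis
  moreover have "\<forall>A' B'. ids_of X (Obj X (perpE X I)) A' B' \<subseteq> JJ I A' B'"
  proof (intro allI subsetI)
    fix A0 B0 f assume "f \<in> ids_of X (Obj X (perpE X I)) A0 B0"
    hence f: "A0 = B0" "A0 \<in> Obj X (perpE X I)" "f = Ide X A0" unfolding ids_of_def by (auto split: if_splits)
    show "f \<in> JJ I A0 B0" unfolding JJ_def using f ide_hom by blast
  qed
  ultimately have "j \<in> JJ I A A'" using JJ_ideal[OF I] unfolding gen_ideal_def by blast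
  then obtain W e v where w: "W \<in> Obj X (perpE X I)" "e \<in> Ext X C W" "v \<in> Hom X W A'"
    "push X C v e = push X C j d" using dE unfolding JJ_def by blast
  obtain x2 y2 where r3: "Rlz X C W e x2 y2" using w rlz_ex by blast
  have y2h: "y2 \<in> Hom X (Cod X x2) C" using r3 rlz_props by blast
  have "push X C v e = pull X A' (Ide X C) d'" using w pj by simp
  then obtain b' where b': "b' \<in> Hom X (Cod X x2) (Cod X x')" "Comp X i b' = Comp X (Ide X C) y2"
    using rlz_mor[OF r3 r2 w(3) ide_hom] by blast
  have y2e: "Comp X i b' = y2" using b' ide_l y2h by metis
  have "Comp X (Ide X C) (Comp X i b') \<in> I (Cod X x2) C"
    using I b' cx iI ide_hom unfolding is_ideal_def by metis
  hence "y2 \<in> I (Cod X x2) C" using y2e ide_l y2h by metis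
  thus "\<exists>Xo i. object_special_precover X I C Xo i"
    unfolding object_special_precover_def using r3 w(1) by blast
qed

end

theorem proposition5p2:
  fixes X :: "('o,'m,'e) etcat" and I :: "'o \<Rightarrow> 'o \<Rightarrow> 'm set"
  assumes "ET12 X"
    and "is_ideal X I"
    and "special_precovering X I"
    and "object_ideal X (perpE X I)"
  shows "object_special_precovering X I"
  using main_lemma assms by blast

end
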